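(* Let $\mathfrak{H}=(H,\wedge,\vee,\to,\bot,\top,\Box)$ be a $\mathsf{K4}^{\mathrm{i}}$-algebra. Then $\mathfrak{H}$ is a $\mathsf{GL}^{\mathrm{i}}$-algebra if and only if every $\mathfrak{H}$-polynomial $t(p)$ in one variable $p$ in which $p$ is $\Box$-guarded has a fixed point, i.e. there is $\mathsf{h}\in H$ with $t(\mathsf{h})=\mathsf{h}$.
   Context: A $\mathsf{K4}^{\mathrm{i}}$-algebra is a Heyting algebra $(H,\wedge,\vee,\to,\bot,\top)$ with a unary operation $\Box$ that preserves $\top$ and finite meets (i.e. $\Box\top=\top$ and $\Box(a\wedge b)=\Box a\wedge\Box b$) and satisfies $\Box a\le\Box\Box a$ for all $a$. A $\mathsf{GL}^{\mathrm{i}}$-algebra is a $\mathsf{K4}^{\mathrm{i}}$-algebra additionally satisfying $\Box(\Box a\to a)=\Box a$ for all $a$. An $\mathfrak{H}$-polynomial is a term in the signature $\wedge,\vee,\to,\bot,\top,\Box$ enriched with a constant for each element of $H$; a variable $p$ is $\Box$-guarded in a polynomial if every occurrence of $p$ lies within the scope of some $\Box$. *)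

theory Defs
  imports Main
begin

definition heyting_imp :: "('a::bounded_lattice \<Rightarrow> 'a \<Rightarrow> 'a) \<Rightarrow> bool" where
  "heyting_imp imp \<longleftrightarrow> (\<forall>a b c. c \<le> imp a b \<longleftrightarrow> inf c a \<le> b)"

definition K4i_algebra :: "('a::bounded_lattice \<Rightarrow> 'a \<Rightarrow> 'a) \<Rightarrow> ('a \<Rightarrow> 'a) \<Rightarrow> bool" where
  "K4i_algebra imp box \<longleftrightarrow> heyting_imp imp
     \<and> box top = top
     \<and> (\<forall>a b. box (inf a b) = inf (box a) (box b))
     \<and> (\<forall>a. box a \<le> box (box a))"

definition GLi_algebra :: "('a::bounded_lattice \<Rightarrow> 'a \<Rightarrow> 'a) \<Rightarrow> ('a \<Rightarrow> 'a) \<Rightarrow> bool" where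
  "GLi_algebra imp box \<longleftrightarrow> K4i_algebra imp box \<and> (\<forall>a. box (imp (box a) a) = box a)"

datatype 'a poly1 =
    PVar
  | PConst 'a
  | PBot
  | PTop
  | PMeet "'a poly1" "'a poly1"
  | PJoin "'a poly1" "'a poly1"
  | PImp "'a poly1" "'a poly1"
  | PBox "'a poly1"

fun peval :: "('a::bounded_lattice \<Rightarrow> 'a \<Rightarrow> 'a) \<Rightarrow> ('a \<Rightarrow> 'a) \<Rightarrow> 'a \<Rightarrow> 'a poly1 \<Rightarrow> 'a" where
  "peval imp box h PVar = h"
| "peval imp box h (PConst c) = c"
| "peval imp box h PBot = bot"
| "peval imp box h PTop = top"
| "peval imp box h (PMeet s t) = inf (peval imp box h s) (peval imp box h t)"
| "peval imp box h (PJoin s t) = sup (peval imp box h s) (peval imp box h t)"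
| "peval imp box h (PImp s t) = imp (peval imp box h s) (peval imp box h t)"
| "peval imp box h (PBox s) = box (peval imp box h s)"

fun box_guarded :: "'a poly1 \<Rightarrow> bool" where
  "box_guarded PVar = False"
| "box_guarded (PConst c) = True"
| "box_guarded PBot = True"
| "box_guarded PTop = True"
| "box_guarded (PMeet s t) = (box_guarded s \<and> box_guarded t)"
| "box_guarded (PJoin s t) = (box_guarded s \<and> box_guarded t)"
| "box_guarded (PImp s t) = (box_guarded s \<and> box_guarded t)"
| "box_guarded (PBox s) = True"

end

theory Submission
  imports Defs
begin

locale K4loc =
  fixes imp :: "'a::bounded_lattice \<Rightarrow> 'a \<Rightarrow> 'a" and box :: "'a \<Rightarrow> 'a"
  assumes K4: "K4i_algebra imp box"
begin

lemma res: "c \<le> imp a b \<longleftrightarrow> inf c a \<le> b"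
  using K4 unfolding K4i_algebra_def heyting_imp_def by blast

lemma box_inf: "box (inf a b) = inf (box a) (box b)"
  using K4 unfolding K4i_algebra_def by blast

lemma box_trans: "box a \<le> box (box a)"
  using K4 unfolding K4i_algebra_def by blast

lemma box_mono: "a \<le> b \<Longrightarrow> box a \<le> box b"
  by (metis box_inf inf.absorb1 inf.cobounded2)

definition bi where "bi x y = inf (imp x y) (imp y x)"

lemma le_bi: "c \<le> bi x y \<longleftrightarrow> inf c x \<le> y \<and> inf c y \<le> x"
  by (simp add: bi_def res)

lemma bi_refl: "c \<le> bi x x"
  by (simp add: le_bi)

definition tr where "tr c \<longleftrightarrow> c \<le> box c"

lemma cong_inf: "c \<le> bi x1 x2 \<Longrightarrow> c \<le> bi y1 y2 \<Longrightarrow> c \<le> bi (inf x1 y1) (inf x2 y2)"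
proof -
  assume a: "c \<le> bi x1 x2" "c \<le> bi y1 y2"
  have "inf c (inf x1 y1) \<le> inf c x1" "inf c (inf x1 y1) \<le> inf c y1"
       "inf c (inf x2 y2) \<le> inf c x2" "inf c (inf x2 y2) \<le> inf c y2"
    by (auto intro: le_infI2[OF inf_le1] le_infI2[OF inf_le2])
  thus ?thesis using a unfolding le_bi by (meson le_inf_iff order_trans)
qed

lemma cong_sup: "c \<le> bi x1 x2 \<Longrightarrow> c \<le> bi y1 y2 \<Longrightarrow> c \<le> bi (sup x1 y1) (sup x2 y2)"
proof -
  assume a: "c \<le> bi x1 x2" "c \<le> bi y1 y2"
  have "inf c (sup x1 y1) \<le> sup x2 y2"
  proof -
    have "x1 \<le> imp c (sup x2 y2)" using a unfolding le_bi res
      by (metis inf_commute le_supI1)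
    moreover have "y1 \<le> imp c (sup x2 y2)" using a unfolding le_bi res
      by (metis inf_commute le_supI2)
    ultimately have "sup x1 y1 \<le> imp c (sup x2 y2)" by simp
    thus ?thesis unfolding res by (simp add: inf_commute)
  qed
  moreover have "inf c (sup x2 y2) \<le> sup x1 y1"
  proof -
    have "x2 \<le> imp c (sup x1 y1)" using a unfolding le_bi res
      by (metis inf_commute le_supI1)
    moreover have "y2 \<le> imp c (sup x1 y1)" using a unfolding le_bi res
      by (metis inf_commute le_supI2)
    ultimately have "sup x2 y2 \<le> imp c (sup x1 y1)" by simp
    thus ?thesis unfolding res by (simp add: inf_commute)
  qed
  ultimately show ?thesis by (simp add: le_bi)
qed

lemma imp_mp: "inf (imp x y) x \<le> y"
  using res by blast

lemma cong_imp1: "c \<le> bi x1 x2 \<Longrightarrow> c \<le> bi y1 y2 \<Longrightarrow> inf c (imp x1 y1) \<le> imp x2 y2"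
proof -
  assume a: "c \<le> bi x1 x2" "c \<le> bi y1 y2"
  have "inf (inf c (imp x1 y1)) x2 \<le> inf c (inf (imp x1 y1) (inf c x2))"
    by (simp add: inf.coboundedI1 inf.coboundedI2 le_infI2)
  also have "\<dots> \<le> inf c (inf (imp x1 y1) x1)"
    using a(1) unfolding le_bi by (meson inf_mono order_refl)
  also have "\<dots> \<le> inf c y1" using imp_mp by (meson inf_mono order_refl)
  also have "\<dots> \<le> y2" using a(2) unfolding le_bi by blast
  finally show ?thesis unfolding res .
qed

lemma bi_sym: "c \<le> bi x y \<Longrightarrow> c \<le> bi y x"
  by (simp add: le_bi)

lemma cong_imp: "c \<le> bi x1 x2 \<Longrightarrow> c \<le> bi y1 y2 \<Longrightarrow> c \<le> bi (imp x1 y1) (imp x2 y2)"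
  using cong_imp1[of c x1 x2 y1 y2] cong_imp1[of c x2 x1 y2 y1] bi_sym
  by (simp add: le_bi inf_commute)

lemma cong_box: "tr c \<Longrightarrow> c \<le> bi x y \<Longrightarrow> c \<le> bi (box x) (box y)"
proof -
  assume t: "tr c" and a: "c \<le> bi x y"
  have "inf c (box x) \<le> box y"
  proof -
    have "inf c (box x) \<le> inf (box c) (box x)" using t unfolding tr_def
      by (simp add: inf.coboundedI1)
    also have "\<dots> = box (inf c x)" by (simp add: box_inf)
    also have "\<dots> \<le> box y" using a unfolding le_bi by (simp add: box_mono)
    finally show ?thesis .
  qed
  moreover have "inf c (box y) \<le> box x"
  proof -
    have "inf c (box y) \<le> inf (box c) (box y)" using t unfolding tr_def
      by (simp add: inf.coboundedI1)
    also have "\<dots> = box (inf c y)" by (simp add: box_inf)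
    also have "\<dots> \<le> box x" using a unfolding le_bi by (simp add: box_mono)
    finally show ?thesis .
  qed
  ultimately show ?thesis by (simp add: le_bi)
qed

lemma subst: "tr c \<Longrightarrow> c \<le> bi x y \<Longrightarrow> c \<le> bi (peval imp box x t) (peval imp box y t)"
  by (induction t) (auto intro: cong_inf cong_sup cong_imp cong_box bi_refl)

definition good :: "('a \<Rightarrow> (nat \<Rightarrow> 'a) \<Rightarrow> 'a) \<Rightarrow> bool" where
  "good G \<longleftrightarrow> (\<forall>c x1 x2 e1 e2. tr c \<longrightarrow> c \<le> bi x1 x2 \<longrightarrow> (\<forall>j. c \<le> bi (e1 j) (e2 j))
      \<longrightarrow> c \<le> bi (G x1 e1) (G x2 e2))"

definition congF :: "((nat \<Rightarrow> 'a) \<Rightarrow> 'a) \<Rightarrow> bool" where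
  "congF \<phi> \<longleftrightarrow> (\<forall>c e1 e2. tr c \<longrightarrow> (\<forall>j. c \<le> bi (e1 j) (e2 j)) \<longrightarrow> c \<le> bi (\<phi> e1) (\<phi> e2))"

lemma const_case:
  assumes "good G"
  shows "\<exists>\<phi>. congF \<phi> \<and> (\<forall>e. G k e = \<phi> e)"
proof (intro exI conjI allI)
  show "congF (\<lambda>e. G k e)" unfolding congF_def
  proof (intro allI impI)
    fix c and e1 e2 :: "nat \<Rightarrow> 'a"
    assume "tr c" "\<forall>j. c \<le> bi (e1 j) (e2 j)"
    thus "c \<le> bi (G k e1) (G k e2)" using assms bi_refl unfolding good_def by blast
  qed
qed simp

lemma bin_case:
  assumes opc: "\<And>c x1 x2 y1 y2. c \<le> bi x1 x2 \<Longrightarrow> c \<le> bi y1 y2 \<Longrightarrow> c \<le> bi (op x1 y1) (op x2 y2)"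
  and IHs: "\<And>G. good G \<Longrightarrow> \<exists>\<phi>. congF \<phi> \<and> (\<forall>e. G (S (\<phi> e)) e = \<phi> e)"
  and IHt: "\<And>G. good G \<Longrightarrow> \<exists>\<phi>. congF \<phi> \<and> (\<forall>e. G (T (\<phi> e)) e = \<phi> e)"
  and g: "good G"
  shows "\<exists>\<phi>. congF \<phi> \<and> (\<forall>e. G (op (S (\<phi> e)) (T (\<phi> e))) e = \<phi> e)"
proof -
  define G1 where "G1 = (\<lambda>x (e::nat \<Rightarrow> 'a). G (op x (e 0)) (\<lambda>n. e (Suc n)))"
  have "good G1" unfolding good_def G1_def
  proof (intro allI impI)
    fix c x1 x2 and e1 e2 :: "nat \<Rightarrow> 'a"
    assume t: "tr c" and h1: "c \<le> bi x1 x2" and h2: "\<forall>j. c \<le> bi (e1 j) (e2 j)"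
    have "c \<le> bi (op x1 (e1 0)) (op x2 (e2 0))" using opc h1 h2 by blast
    moreover have "\<forall>j. c \<le> bi (e1 (Suc j)) (e2 (Suc j))" using h2 by blast
    ultimately show "c \<le> bi (G (op x1 (e1 0)) (\<lambda>n. e1 (Suc n))) (G (op x2 (e2 0)) (\<lambda>n. e2 (Suc n)))"
      using g[unfolded good_def, rule_format, of c "op x1 (e1 0)" "op x2 (e2 0)" "\<lambda>n. e1 (Suc n)" "\<lambda>n. e2 (Suc n)"] t by simp
  qed
  then obtain \<phi>1 where c1: "congF \<phi>1" and f1: "\<And>e. G1 (S (\<phi>1 e)) e = \<phi>1 e"
    using IHs by blast
  define G2 where "G2 = (\<lambda>y e. \<phi>1 (case_nat y e))"
  have "good G2" unfolding good_def G2_def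
  proof (intro allI impI)
    fix c x1 x2 and e1 e2 :: "nat \<Rightarrow> 'a"
    assume "tr c" "c \<le> bi x1 x2" "\<forall>j. c \<le> bi (e1 j) (e2 j)"
    moreover have "\<forall>j. c \<le> bi (case_nat x1 e1 j) (case_nat x2 e2 j)"
      using calculation by (auto split: nat.split)
    ultimately show "c \<le> bi (\<phi>1 (case_nat x1 e1)) (\<phi>1 (case_nat x2 e2))"
      using c1 unfolding congF_def by blast
  qed
  then obtain \<phi>2 where c2: "congF \<phi>2" and f2: "\<And>e. G2 (T (\<phi>2 e)) e = \<phi>2 e"
    using IHt by blast
  show ?thesis
  proof (intro exI conjI allI)
    show "congF \<phi>2" by (rule c2)
    fix e
    have q: "\<phi>1 (case_nat (T (\<phi>2 e)) e) = \<phi>2 e" using f2[of e] by (simp add: G2_def)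
    have "G (op (S (\<phi>1 (case_nat (T (\<phi>2 e)) e))) (T (\<phi>2 e))) e = \<phi>1 (case_nat (T (\<phi>2 e)) e)"
      using f1[of "case_nat (T (\<phi>2 e)) e"] by (simp add: G1_def)
    then show "G (op (S (\<phi>2 e)) (T (\<phi>2 e))) e = \<phi>2 e" unfolding q .
  qed
qed

end

locale GLloc = K4loc +
  assumes gl: "box (imp (box a) a) = box a"
begin

lemma box_case:
  assumes g: "good G"
  shows "\<exists>\<phi>. congF \<phi> \<and> (\<forall>e. G (box (peval imp box (\<phi> e) s)) e = \<phi> e)"
proof (intro exI conjI allI)
  define \<phi> where "\<phi> = (\<lambda>e. G (box (peval imp box (G top e) s)) e)"
  show "congF \<phi>" unfolding congF_def
  proof (intro allI impI)
    fix c and e1 e2 :: "nat \<Rightarrow> 'a"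
    assume t: "tr c" and h: "\<forall>j. c \<le> bi (e1 j) (e2 j)"
    have "c \<le> bi (G top e1) (G top e2)" using g t h bi_refl unfolding good_def by blast
    hence "c \<le> bi (peval imp box (G top e1) s) (peval imp box (G top e2) s)" using t subst by blast
    hence "c \<le> bi (box (peval imp box (G top e1) s)) (box (peval imp box (G top e2) s))"
      using t cong_box by blast
    thus "c \<le> bi (\<phi> e1) (\<phi> e2)" using g t h unfolding good_def \<phi>_def by blast
  qed
  fix e
  define u where "u = G top e"
  define Y where "Y = peval imp box u s"
  define a where "a = box Y"
  define X where "X = peval imp box (G a e) s"
  have ta: "tr a" unfolding tr_def a_def by (rule box_trans)
  have "a \<le> bi a top" by (simp add: le_bi)
  hence "a \<le> bi (G a e) u" using g ta bi_refl unfolding good_def u_def by blast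
  hence "a \<le> bi X Y" unfolding X_def Y_def using ta subst by blast
  hence h1: "inf a X \<le> Y" and h2: "inf a Y \<le> X" unfolding le_bi by auto
  have "X \<le> imp a Y" using h1 by (simp add: res inf_commute)
  hence "box X \<le> box (imp a Y)" by (rule box_mono)
  hence b1: "box X \<le> a" using gl unfolding a_def by simp
  have "box (inf a Y) \<le> box X" using h2 by (rule box_mono)
  moreover have "box (inf a Y) = a" unfolding a_def box_inf
    using box_trans[of Y] by (simp add: inf.absorb2)
  ultimately have "box X = a" using b1 by simp
  thus "G (box (peval imp box (\<phi> e) s)) e = \<phi> e"
    unfolding \<phi>_def by (simp add: X_def a_def Y_def u_def)
qed

lemma fix_ex: "box_guarded t \<Longrightarrow> good G \<Longrightarrow> \<exists>\<phi>. congF \<phi> \<and> (\<forall>e. G (peval imp box (\<phi> e) t) e = \<phi> e)"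
proof (induction t arbitrary: G)
  case PVar then show ?case by simp
next
  case (PConst x) then show ?case using const_case by simp
next
  case PBot then show ?case using const_case by simp
next
  case PTop then show ?case using const_case by simp
next
  case (PMeet s t) then show ?case
    using bin_case[of inf "\<lambda>h. peval imp box h s" "\<lambda>h. peval imp box h t" G] cong_inf by simp
next
  case (PJoin s t) then show ?case
    using bin_case[of sup "\<lambda>h. peval imp box h s" "\<lambda>h. peval imp box h t" G] cong_sup by simp
next
  case (PImp s t) then show ?case
    using bin_case[of imp "\<lambda>h. peval imp box h s" "\<lambda>h. peval imp box h t" G] cong_imp by simp
next
  case (PBox s) then show ?case using box_case by simp
qed

lemma fixed_point: "box_guarded t \<Longrightarrow> \<exists>h. peval imp box h t = h"
proof -
  assume "box_guarded t"
  moreover have "good (\<lambda>x e. x)" unfolding good_def by blast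
  ultimately obtain \<phi> where "\<forall>e. peval imp box (\<phi> e) t = \<phi> e" using fix_ex by blast
  thus ?thesis by blast
qed

end

lemma (in K4loc) fp_to_gl:
  assumes fp: "\<exists>h. imp (box h) a = h"
  shows "box (imp (box a) a) = box a"
proof -
  obtain h where h: "imp (box h) a = h" using fp by blast
  have "a \<le> imp (box a) a" by (simp add: res)
  hence ge: "box a \<le> box (imp (box a) a)" by (rule box_mono)
  have "inf h (box h) \<le> a" using h res by (metis order_refl)
  hence "box (inf h (box h)) \<le> box a" by (rule box_mono)
  moreover have "box (inf h (box h)) = box h" unfolding box_inf
    using box_trans[of h] by (simp add: inf.absorb1)
  ultimately have bh: "box h \<le> box a" by simp
  have "inf (imp (box a) a) (box h) \<le> inf (imp (box a) a) (box a)"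
    using bh by (simp add: inf.coboundedI2)
  also have "\<dots> \<le> a" by (rule imp_mp)
  finally have "imp (box a) a \<le> h" using h res by metis
  hence "box (imp (box a) a) \<le> box h" by (rule box_mono)
  with bh ge show ?thesis by simp
qed

theorem theorem3p5:
  fixes imp :: "'a::bounded_lattice \<Rightarrow> 'a \<Rightarrow> 'a" and box :: "'a \<Rightarrow> 'a"
  assumes "K4i_algebra imp box"
  shows "GLi_algebra imp box \<longleftrightarrow>
           (\<forall>t :: 'a poly1. box_guarded t \<longrightarrow> (\<exists>h. peval imp box h t = h))"
proof
  assume "GLi_algebra imp box"
  then interpret GLloc imp box
    by unfold_locales (use assms in \<open>auto simp: GLi_algebra_def\<close>)
  show "\<forall>t :: 'a poly1. box_guarded t \<longrightarrow> (\<exists>h. peval imp box h t = h)"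
    using fixed_point by blast
next
  assume A: "\<forall>t :: 'a poly1. box_guarded t \<longrightarrow> (\<exists>h. peval imp box h t = h)"
  interpret K4loc imp box by unfold_locales (rule assms)
  have "\<forall>a. box (imp (box a) a) = box a"
  proof
    fix a
    have "\<exists>h. peval imp box h (PImp (PBox PVar) (PConst a)) = h"
      using A[rule_format, of "PImp (PBox PVar) (PConst a)"] by simp
    hence "\<exists>h. imp (box h) a = h" by simp
    thus "box (imp (box a) a) = box a" by (rule fp_to_gl)
  qed
  with assms show "GLi_algebra imp box" by (simp add: GLi_algebra_def)
qed

end
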